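(* Let $\beta\in(0,1)$ and $\alpha\ge1$. Then $$\sum_{n\ge1}\frac{\alpha^{n-1}}{\Gamma(n(1-\beta))}\le\frac{\beta+1}{1-\beta}\,\alpha^{\frac{1+\beta}{1-\beta}}+\frac{\alpha^{\frac{2}{1-\beta}}\exp\!\big(\alpha^{\frac{1}{1-\beta}}\big)}{1-\beta}.$$
   Context: $\Gamma$ denotes Euler's Gamma function. *)

theory Defs
  imports "HOL-Analysis.Analysis"
begin

end

theory Submission
  imports Defs
begin

lemma lnG_tangent:
  fixes a t :: real assumes a: "a > 0" and t: "t > 0"
  shows "ln_Gamma t \<ge> ln_Gamma a + Digamma a * (t - a)"
proof (cases t a rule: linorder_cases)
  case less
  have "\<exists>\<xi>. t < \<xi> \<and> \<xi> < a \<and> ln_Gamma a - ln_Gamma t = (a - t) * Digamma \<xi>"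
    using less t by (intro MVT2 derivative_intros impI allI) auto
  then obtain \<xi> where xi: "t < \<xi>" "\<xi> < a" "ln_Gamma a - ln_Gamma t = (a - t) * Digamma \<xi>"
    by auto
  have "Digamma \<xi> \<le> Digamma a" using xi t by (intro Digamma_real_mono) auto
  hence "(a - t) * Digamma \<xi> \<le> (a - t) * Digamma a" using less by (intro mult_left_mono) auto
  with xi show ?thesis by (simp add: algebra_simps)
next
  case equal thus ?thesis by simp
next
  case greater
  have "\<exists>\<xi>. a < \<xi> \<and> \<xi> < t \<and> ln_Gamma t - ln_Gamma a = (t - a) * Digamma \<xi>"
    using greater a by (intro MVT2 derivative_intros impI allI) auto
  then obtain \<xi> where xi: "a < \<xi>" "\<xi> < t" "ln_Gamma t - ln_Gamma a = (t - a) * Digamma \<xi>"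
    by auto
  have "Digamma a \<le> Digamma \<xi>" using xi a by (intro Digamma_real_mono) auto
  hence "(t - a) * Digamma a \<le> (t - a) * Digamma \<xi>" using greater by (intro mult_left_mono) auto
  with xi show ?thesis by (simp add: algebra_simps)
qed

lemma em_bounds: "1/2 \<le> (euler_mascheroni::real)" "(euler_mascheroni::real) \<le> 1"
proof -
  have "euler_mascheroni \<in> {(harm 1 - ln (real (Suc 1))) + inverse (real (2*(1+1)))..(harm 1 - ln (real (Suc 1))) + inverse (real (2*1))}"
    by (rule euler_mascheroni_bounds) simp
  moreover have "harm 1 = (1::real)" by (simp add: harm_def)
  ultimately have "1 - ln 2 + 1/4 \<le> (euler_mascheroni::real)" "(euler_mascheroni::real) \<le> 1 - ln 2 + 1/2"
    by (auto simp: inverse_eq_divide)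
  thus "1/2 \<le> (euler_mascheroni::real)" "(euler_mascheroni::real) \<le> 1"
    using ln2_ge_two_thirds ln2_le_25_over_36 by linarith+
qed

lemma lnG1: "ln_Gamma (1::real) = 0" and lnG2: "ln_Gamma (2::real) = 0"
  using ln_Gamma_real_conv_fact[of 1] ln_Gamma_real_conv_fact[of 2] by simp_all

lemma Digamma2: "Digamma (2::real) = 1 - euler_mascheroni"
  using Digamma_plus1[of "1::real"] by simp

lemma inv_le_exp_aux: fixes G y :: real assumes "exp (- y) \<le> G"
  shows "1 / G \<le> exp y"
proof -
  have G: "G > 0" using assms by (meson exp_gt_zero less_le_trans)
  have "exp y * exp (- y) \<le> exp y * G" using assms by (intro mult_left_mono) auto
  hence "1 \<le> exp y * G" by (simp add: exp_minus)
  thus ?thesis using G by (simp add: divide_le_eq mult.commute)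
qed

lemma invG_exp1: fixes t :: real assumes "0 < t"
  shows "1 / Gamma t \<le> exp (euler_mascheroni * (t - 1))"
proof -
  have "ln_Gamma t \<ge> - euler_mascheroni * (t - 1)"
    using lnG_tangent[of 1 t] assms lnG1 by simp
  hence "exp (- euler_mascheroni * (t - 1)) \<le> Gamma t"
    using Gamma_real_pos_exp[OF assms] by simp
  thus ?thesis by (intro inv_le_exp_aux) simp
qed

lemma invG_exp2: fixes t :: real assumes "0 < t"
  shows "1 / Gamma t \<le> exp ((1 - euler_mascheroni) * (2 - t))"
proof -
  have "ln_Gamma t \<ge> - ((1 - euler_mascheroni) * (2 - t))"
    using lnG_tangent[of 2 t] assms lnG2 Digamma2 by (simp add: algebra_simps)
  hence "exp (- ((1 - euler_mascheroni) * (2 - t))) \<le> Gamma t"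
    using Gamma_real_pos_exp[OF assms] by simp
  thus ?thesis by (intro inv_le_exp_aux) simp
qed

lemma invG_le1: fixes t :: real assumes "0 < t" "t \<le> 1"
  shows "1 / Gamma t \<le> 1"
proof -
  have "euler_mascheroni * (t - 1) \<le> 0" using em_bounds assms
    by (intro mult_nonneg_nonpos) auto
  thus ?thesis using invG_exp1[OF assms(1)] by (meson exp_le_one_iff order_trans)
qed

lemma invG_12: fixes t :: real assumes "1 \<le> t" "t \<le> 2"
  shows "1 / Gamma t \<le> exp (1/4)"
proof -
  have t0: "t > 0" using assms by simp
  have A: "ln_Gamma t \<ge> - euler_mascheroni * (t - 1)"
    using lnG_tangent[of 1 t] t0 lnG1 by simp
  have B: "ln_Gamma t \<ge> (1 - euler_mascheroni) * (t - 2)"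
    using lnG_tangent[of 2 t] t0 lnG2 Digamma2 by (simp add: algebra_simps)
  have "(2 - t) * ln_Gamma t + (t - 1) * ln_Gamma t \<ge>
        (2 - t) * (- euler_mascheroni * (t - 1)) + (t - 1) * ((1 - euler_mascheroni) * (t - 2))"
    using A B assms by (intro add_mono mult_left_mono) auto
  hence C: "ln_Gamma t \<ge> - ((t - 1) * (2 - t))" by (simp add: algebra_simps)
  have "(t - 1) * (2 - t) \<le> 1/4" 
  proof -
    have "0 \<le> (t - 3/2)^2" by simp
    thus ?thesis by (simp add: power2_eq_square algebra_simps)
  qed
  hence "ln_Gamma t \<ge> - (1/4)" using C by linarith
  hence "exp (- (1/4)) \<le> Gamma t"
    using Gamma_real_pos_exp[OF t0] by simp
  thus ?thesis by (intro inv_le_exp_aux) simp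
qed

lemma Gamma_ge_fact: fixes t :: real and m :: nat assumes "2 \<le> m" "real m \<le> t"
  shows "fact (m - 1) \<le> Gamma t"
proof -
  have "Gamma (real m) = fact (m - 1)"
    using Gamma_fact[of "m - 1", where 'a=real] assms by (simp add: of_nat_diff)
  moreover have "Gamma (real m) \<le> Gamma t"
  proof (cases "real m = t")
    case False
    thus ?thesis using assms by (intro less_imp_le[OF Gamma_real_strict_mono]) auto
  qed simp
  ultimately show ?thesis by simp
qed


lemma Nfacts: fixes g :: real assumes "0 < g"
  shows "real (nat \<lfloor>2/g\<rfloor>) * g \<le> 2" "2 < (real (nat \<lfloor>2/g\<rfloor>) + 1) * g"
proof -
  have p: "2/g > 0" using assms by simp
  have e: "real (nat \<lfloor>2/g\<rfloor>) = real_of_int \<lfloor>2/g\<rfloor>" using p by simp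
  have h1: "real (nat \<lfloor>2/g\<rfloor>) \<le> 2/g" and h2: "2/g < real (nat \<lfloor>2/g\<rfloor>) + 1"
    unfolding e by linarith+
  show "real (nat \<lfloor>2/g\<rfloor>) * g \<le> 2" using h1 assms by (simp add: le_divide_eq)
  have "(2/g) * g < (real (nat \<lfloor>2/g\<rfloor>) + 1) * g" using h2 assms by (intro mult_strict_right_mono)
  thus "2 < (real (nat \<lfloor>2/g\<rfloor>) + 1) * g" using assms by simp
qed

lemma head_bound: fixes g :: real assumes g0: "0 < g" and g1: "g < 1"
  shows "g * (\<Sum>n<nat \<lfloor>2/g\<rfloor>. 1 / Gamma (real (Suc n) * g)) \<le> 1 + (real (nat \<lfloor>2/g\<rfloor>) - 1) * g"
proof -
  define N where "N = nat \<lfloor>2/g\<rfloor>"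
  have N1: "real N * g \<le> 2" and N2: "2 < (real N + 1) * g" using Nfacts[OF g0] unfolding N_def by auto
  have em: "1/2 \<le> (euler_mascheroni::real)" "(euler_mascheroni::real) \<le> 1" by (rule em_bounds)+
  have f0: "1 / Gamma (real (Suc 0) * g) \<le> 1" using g0 g1 by (intro invG_le1) auto
  consider "g \<le> 1/2" | "1/2 < g" "g \<le> 2/3" | "2/3 < g" by linarith
  then have "g * (\<Sum>n<N. 1 / Gamma (real (Suc n) * g)) \<le> 1 + (real N - 1) * g"
  proof cases
    case 3
    have "real N * g < 3 * g" using N1 3 by linarith
    hence "real N < 3" using g0 by (simp add: mult_less_cancel_right)
    moreover have "2 * g < (real N + 1) * g" using N2 g1 by linarith
    hence "2 < real N + 1" using g0 by (simp add: mult_less_cancel_right)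
    hence "real N > 1" by linarith
    ultimately have "N = 2" by linarith
    have "1 / Gamma (real (Suc 1) * g) \<le> exp ((1 - euler_mascheroni) * (2 - 2 * g))"
      using invG_exp2[of "2*g"] g0 by simp
    also have "\<dots> \<le> exp (1 - g)" using em g1
    proof (intro exp_mono)
      have "(2 * (1 - euler_mascheroni)) * (1 - g) \<le> 1 * (1 - g)" using em g1 by (intro mult_right_mono) auto
      thus "(1 - euler_mascheroni) * (2 - 2 * g) \<le> 1 - g" by (simp add: algebra_simps)
    qed
    also have "\<dots> \<le> 1 / g"
    proof -
      have "exp (1 - g) \<le> exp (- ln g)" using ln_le_minus_one[OF g0] by simp
      thus ?thesis using g0 by (simp add: exp_diff exp_minus inverse_eq_divide)
    qed
    finally have f1: "1 / Gamma (real (Suc 1) * g) \<le> 1 / g" .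
    have "g * (\<Sum>n<N. 1 / Gamma (real (Suc n) * g)) = g * (1 / Gamma (real (Suc 0) * g)) + g * (1 / Gamma (real (Suc 1) * g))"
      using \<open>N = 2\<close> by (simp add: numeral_2_eq_2 algebra_simps)
    also have "\<dots> \<le> g * 1 + g * (1 / g)" using f0 f1 g0 by (intro add_mono mult_left_mono) auto
    finally show ?thesis using g0 \<open>N = 2\<close> by simp
  next
    case 2
    have "real N * g < 4 * g" using N1 2 by linarith
    hence "real N < 4" using g0 by (simp add: mult_less_cancel_right)
    moreover have "3 * g < (real N + 1) * g" using N2 2 by linarith
    hence "3 < real N + 1" using g0 by (simp add: mult_less_cancel_right)
    hence "real N > 2" by linarith
    ultimately have "N = 3" by linarith
    define y1 where "y1 = 2*g - 1"
    define y2 where "y2 = (2 - 3*g)/2"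
    have y1: "0 \<le> y1" "y1 \<le> 1" and y2: "0 \<le> y2" "y2 \<le> 1" using 2 by (auto simp: y1_def y2_def)
    have "1 / Gamma (real (Suc 1) * g) \<le> exp (euler_mascheroni * (2*g - 1))"
      using invG_exp1[of "2*g"] g0 by simp
    also have "\<dots> \<le> exp y1" unfolding y1_def
    proof (intro exp_mono)
      have "euler_mascheroni * (2*g - 1) \<le> 1 * (2*g - 1)" using em 2 by (intro mult_right_mono) auto
      thus "euler_mascheroni * (2*g - 1) \<le> 2*g - 1" by simp
    qed
    also have "\<dots> \<le> 1 + y1 + y1^2" by (rule exp_bound[OF y1])
    finally have f1: "1 / Gamma (real (Suc 1) * g) \<le> 1 + y1 + y1^2" .
    have "1 / Gamma (real (Suc 2) * g) \<le> exp ((1 - euler_mascheroni) * (2 - 3*g))"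
      using invG_exp2[of "3*g"] g0 by simp
    also have "\<dots> \<le> exp y2" unfolding y2_def
    proof (intro exp_mono)
      have "(1 - euler_mascheroni) * (2 - 3*g) \<le> (1/2) * (2 - 3*g)" using em 2 by (intro mult_right_mono) auto
      thus "(1 - euler_mascheroni) * (2 - 3*g) \<le> (2 - 3*g) / 2" by simp
    qed
    also have "\<dots> \<le> 1 + y2 + y2^2" by (rule exp_bound[OF y2])
    finally have f2: "1 / Gamma (real (Suc 2) * g) \<le> 1 + y2 + y2^2" .
    have "g * (\<Sum>n<N. 1 / Gamma (real (Suc n) * g)) = g * (1 / Gamma (real (Suc 0) * g) + 1 / Gamma (real (Suc 1) * g) + 1 / Gamma (real (Suc 2) * g))"
      using \<open>N = 3\<close> by (simp add: numeral_3_eq_3 numeral_2_eq_2 algebra_simps)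
    also have "\<dots> \<le> g * (1 + (1 + y1 + y1^2) + (1 + y2 + y2^2))"
      using f0 f1 f2 g0 by (intro add_mono mult_left_mono) auto
    also have "\<dots> \<le> 1 + 2 * g"
    proof -
      have a: "g^3 \<le> (2/3) * g^2"
      proof -
        have "g * g^2 \<le> (2/3) * g^2" using 2 by (intro mult_right_mono) auto
        thus ?thesis by (simp add: power3_eq_cube power2_eq_square)
      qed
      have b0: "0 \<le> (g - 9/14)^2" by simp
      have b: "0 \<le> g^2 - 9/7*g + 81/196" using b0 by (simp add: power2_eq_square algebra_simps)
      have eq: "g * (1 + (1 + y1 + y1^2) + (1 + y2 + y2^2)) = 5*g - 13/2*g^2 + 25/4*g^3"
        unfolding y1_def y2_def by (simp add: power2_eq_square power3_eq_cube field_simps)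
      show ?thesis unfolding eq using a b by linarith
    qed
    finally show ?thesis using \<open>N = 3\<close> by simp
  next
    case 1
    define M where "M = nat \<lfloor>1/g\<rfloor>"
    have p: "1/g > 0" using g0 by simp
    have e: "real M = real_of_int \<lfloor>1/g\<rfloor>" using p M_def by simp
    have h1: "real M \<le> 1/g" and h2: "1/g < real M + 1" unfolding e by linarith+
    have M1: "real M * g \<le> 1" using h1 g0 by (simp add: le_divide_eq)
    have M2: "1 < (real M + 1) * g" using h2 g0 by (simp add: divide_less_eq)
    have "real M * g < (real N + 1) * g" using M1 N2 by linarith
    hence "real M < real N + 1" using g0 by (simp add: mult_less_cancel_right)
    hence MN: "M \<le> N" by linarith
    have c: "exp (1/4::real) \<le> 4/3"
      using exp_bound[of "1/4::real"] by (simp add: power2_eq_square)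
    have split: "{..<N} = {..<M} \<union> {M..<N}" using MN by auto
    have "(\<Sum>n<N. 1 / Gamma (real (Suc n) * g)) = (\<Sum>n<M. 1 / Gamma (real (Suc n) * g)) + (\<Sum>n\<in>{M..<N}. 1 / Gamma (real (Suc n) * g))"
      unfolding split by (rule sum.union_disjoint) auto
    also have "(\<Sum>n<M. 1 / Gamma (real (Suc n) * g)) \<le> (\<Sum>n<M. 1)"
    proof (rule sum_mono)
      fix n assume "n \<in> {..<M}"
      hence "real (Suc n) \<le> real M" by simp
      hence "real (Suc n) * g \<le> 1" using M1 g0 mult_right_mono[of "real (Suc n)" "real M" g] by linarith
      thus "1 / Gamma (real (Suc n) * g) \<le> 1" using g0 by (intro invG_le1) auto
    qed
    also have "(\<Sum>n\<in>{M..<N}. 1 / Gamma (real (Suc n) * g)) \<le> (\<Sum>n\<in>{M..<N}. exp (1/4))"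
    proof (rule sum_mono)
      fix n assume "n \<in> {M..<N}"
      hence "real M + 1 \<le> real (Suc n)" "real (Suc n) \<le> real N" by auto
      hence "1 \<le> real (Suc n) * g" "real (Suc n) * g \<le> 2" using M2 N1 g0
        mult_right_mono[of "real M + 1" "real (Suc n)" g] mult_right_mono[of "real (Suc n)" "real N" g]
        by linarith+
      thus "1 / Gamma (real (Suc n) * g) \<le> exp (1/4)" by (intro invG_12)
    qed
    finally have S: "(\<Sum>n<N. 1 / Gamma (real (Suc n) * g)) \<le> real M + (real N - real M) * exp (1/4)"
      using MN by (simp add: of_nat_diff)
    have "g * (\<Sum>n<N. 1 / Gamma (real (Suc n) * g)) \<le> g * (real M + (real N - real M) * exp (1/4))"
      using S g0 by (intro mult_left_mono) auto
    also have "\<dots> = g * real M + (g * (real N - real M)) * exp (1/4)" by (simp add: algebra_simps)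
    also have "\<dots> \<le> g * real M + (g * (real N - real M)) * (4/3)"
      using c MN g0 by (intro add_left_mono mult_left_mono) auto
    also have "\<dots> \<le> 1 + (real N - 1) * g"
      using M1 M2 N1 1 by (simp add: algebra_simps)
    finally show ?thesis .
  qed
  thus ?thesis unfolding N_def .
qed


definition PhiM :: "real \<Rightarrow> nat \<Rightarrow> real \<Rightarrow> real" where
  "PhiM x m t = (real m + 1 - t) * x^(m + 1) / fact (m - 1) + x^2 * (exp x - (\<Sum>i<m. x^i / fact i))"

definition Phi :: "real \<Rightarrow> real \<Rightarrow> real" where
  "Phi x t = PhiM x (nat \<lfloor>t\<rfloor>) t"

lemma Phi_eq: assumes "real m \<le> t" "t < real m + 1" shows "Phi x t = PhiM x m t"
proof -
  have "\<lfloor>t\<rfloor> = int m" using assms by (simp add: floor_eq_iff)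
  thus ?thesis by (simp add: Phi_def)
qed

lemma exp_ge_partial: fixes x :: real assumes "0 \<le> x" shows "(\<Sum>i<m. x^i / fact i) \<le> exp x"
proof -
  have "(\<lambda>n. x^n /\<^sub>R fact n) sums exp x" by (rule exp_converges)
  hence s: "(\<lambda>n. x^n / fact n) sums exp x" by (simp add: scaleR_conv_of_real divide_inverse mult.commute)
  show ?thesis using assms by (intro sum_le_suminf[OF sums_summable[OF s], of "{..<m}", THEN order_trans])
    (auto simp: sums_unique[OF s, symmetric])
qed

lemma Phi_nonneg: fixes x t :: real assumes "0 \<le> x" "1 \<le> t" shows "0 \<le> Phi x t"
proof -
  define m where "m = nat \<lfloor>t\<rfloor>"
  have fl: "real m \<le> t" "t < real m + 1" using assms unfolding m_def by linarith+
  have "Phi x t = PhiM x m t" using fl by (rule Phi_eq)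
  moreover have "0 \<le> PhiM x m t" unfolding PhiM_def using fl assms exp_ge_partial[of x m]
    by (intro add_nonneg_nonneg mult_nonneg_nonneg divide_nonneg_nonneg) auto
  ultimately show ?thesis by simp
qed

lemma powr_le_pow: fixes x s :: real assumes "1 \<le> x" "s \<le> real k" shows "x powr s \<le> x ^ k"
proof -
  have "x powr s \<le> x powr (real k)" using assms by (intro powr_mono) auto
  also have "\<dots> = x ^ k" using assms by (simp add: powr_realpow)
  finally show ?thesis .
qed

lemma tail_step: fixes x g t :: real
  assumes x: "1 \<le> x" and g0: "0 < g" and g1: "g < 1" and t: "2 < t"
  shows "g * (x powr (t - g) / Gamma t) \<le> Phi x (t - g) - Phi x t"
proof -
  define k where "k = nat \<lfloor>t\<rfloor> - 2"
  have kt: "real k + 2 \<le> t" "t < real k + 3" using t unfolding k_def by linarith+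
  have Gt: "fact (k + 1) \<le> Gamma t" using Gamma_ge_fact[of "k+2" t] kt by simp
  have fpos: "(0::real) < fact (k+1)" by simp
  define A where "A = x powr (t - g) / Gamma t"
  have A0: "0 \<le> A" unfolding A_def using t by simp
  have A1: "A \<le> x^(k+3) / fact (k+1)" unfolding A_def
    using powr_le_pow[OF x, of "t - g" "k+3"] kt g0 Gt fpos x
    by (intro frac_le) auto
  define P where "P = x^(k+3) / fact (k+1)"
  define Q where "Q = x^(k+2) / fact k"
  define T where "T = x^(k+1) / fact (k+1)"
  define S where "S = (\<Sum>i<k+1. x^i / fact i)"
  have e1: "PhiM x (k+2) s = (real k + 3 - s) * P + x^2 * (exp x - (S + T))" for s
  proof -
    have "(\<Sum>i<k+2. x^i / fact i) = S + T" unfolding S_def T_def by simp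
    moreover have "(real k + 3 - s) * P = (real (k+2) + 1 - s) * x^(k+2+1) / fact (k+2-1)"
      unfolding P_def by (simp add: eval_nat_numeral)
    ultimately show ?thesis unfolding PhiM_def by simp
  qed
  have e2: "PhiM x (k+1) s = (real k + 2 - s) * Q + x^2 * (exp x - S)" for s
  proof -
    have "(real k + 2 - s) * Q = (real (k+1) + 1 - s) * x^(k+1+1) / fact (k+1-1)"
      unfolding Q_def by (simp add: eval_nat_numeral)
    thus ?thesis unfolding PhiM_def S_def by simp
  qed
  have xT: "x^2 * T = P" unfolding T_def P_def by (simp add: power_add[symmetric] eval_nat_numeral)
  have Pt: "Phi x t = PhiM x (k+2) t" using kt by (intro Phi_eq) auto
  show ?thesis
  proof (cases "real k + 2 \<le> t - g")
    case True
    have "Phi x (t - g) = PhiM x (k+2) (t - g)" using kt True g0 by (intro Phi_eq) auto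
    hence "Phi x (t - g) - Phi x t = PhiM x (k+2) (t - g) - PhiM x (k+2) t" using Pt by simp
    also have "\<dots> = g * P" unfolding e1 by (simp add: algebra_simps)
    finally have "Phi x (t - g) - Phi x t = g * P" .
    moreover have "g * A \<le> g * P" using A1 g0 unfolding P_def by (intro mult_left_mono) auto
    ultimately show ?thesis unfolding A_def by simp
  next
    case False
    have "Phi x (t - g) = PhiM x (k+1) (t - g)" using kt False g1 by (intro Phi_eq) auto
    hence "Phi x (t - g) - Phi x t = PhiM x (k+1) (t - g) - PhiM x (k+2) t" using Pt by simp
    also have "\<dots> = (real k + 2 - t + g) * Q + (t - real k - 2) * P"
      unfolding e1 e2 using xT by (simp add: algebra_simps)
    finally have D: "Phi x (t - g) - Phi x t = (real k + 2 - t + g) * Q + (t - real k - 2) * P" .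
    have Gk: "fact k \<le> Gamma t" using Gt fact_mono[of k "k+1", where 'a=real] by linarith
    have A2: "A \<le> Q" unfolding A_def Q_def
      using powr_le_pow[OF x, of "t - g" "k+2"] False Gk x
      by (intro frac_le) auto
    have "g * A = (real k + 2 - t + g) * A + (t - real k - 2) * A" by (simp add: algebra_simps)
    also have "\<dots> \<le> (real k + 2 - t + g) * Q + (t - real k - 2) * P"
      using A1 A2 False kt unfolding P_def by (intro add_mono mult_left_mono) auto
    finally show ?thesis using D unfolding A_def by simp
  qed
qed


lemma telescope_ge: fixes F :: "nat \<Rightarrow> real" assumes "N \<le> K"
  shows "(\<Sum>n\<in>{N..<K}. F n - F (Suc n)) = F N - F K"
  using assms
proof (induct K rule: dec_induct)
  case base thus ?case by simp
next
  case (step K) thus ?case by (simp add: sum.atLeastLessThan_Suc)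
qed

lemma main_bound:
  fixes g x :: real assumes g0: "0 < g" and g1: "g < 1" and x1: "1 \<le> x"
  shows "g * (\<Sum>n<K. x powr (real n * g) / Gamma (real (Suc n) * g)) \<le> (2 - g) * x powr (2 - g) + x^2 * exp x"
proof -
  define f where "f n = x powr (real n * g) / Gamma (real (Suc n) * g)" for n
  define N where "N = nat \<lfloor>2/g\<rfloor>"
  have N1: "real N * g \<le> 2" and N2: "2 < (real N + 1) * g" using Nfacts[OF g0] unfolding N_def by auto
  have f0: "0 \<le> f n" for n unfolding f_def using g0 by simp
  define K' where "K' = max K N"
  have "(\<Sum>n<K. f n) \<le> (\<Sum>n<K'. f n)" unfolding K'_def using f0 by (intro sum_mono2) auto
  hence step1: "g * (\<Sum>n<K. f n) \<le> g * (\<Sum>n<K'. f n)" using g0 by (intro mult_left_mono) auto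
  have NK: "N \<le> K'" unfolding K'_def by simp
  have split: "{..<K'} = {..<N} \<union> {N..<K'}" using NK by auto
  have "g * (\<Sum>n<K'. f n) = g * (\<Sum>n<N. f n) + (\<Sum>n\<in>{N..<K'}. g * f n)"
    unfolding split by (subst sum.union_disjoint) (auto simp: sum_distrib_left algebra_simps)
  also have "g * (\<Sum>n<N. f n) \<le> x powr (2 - g) * (1 + (real N - 1) * g)"
  proof -
    have "(\<Sum>n<N. f n) \<le> (\<Sum>n<N. x powr (2 - g) * (1 / Gamma (real (Suc n) * g)))"
    proof (rule sum_mono)
      fix n assume "n \<in> {..<N}"
      hence "real n + 1 \<le> real N" by simp
      hence "real n * g + g \<le> real N * g" using g0 mult_right_mono[of "real n + 1" "real N" g]
        by (simp add: algebra_simps)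
      hence "real n * g \<le> 2 - g" using N1 by linarith
      hence "x powr (real n * g) \<le> x powr (2 - g)" using x1 by (intro powr_mono) auto
      thus "f n \<le> x powr (2 - g) * (1 / Gamma (real (Suc n) * g))" unfolding f_def using g0
        by (simp add: divide_right_mono)
    qed
    also have "\<dots> = x powr (2 - g) * (\<Sum>n<N. 1 / Gamma (real (Suc n) * g))"
      by (simp add: sum_distrib_left)
    finally have "g * (\<Sum>n<N. f n) \<le> x powr (2 - g) * (g * (\<Sum>n<N. 1 / Gamma (real (Suc n) * g)))"
      using g0 by (simp add: mult_left_mono mult.left_commute)
    also have "\<dots> \<le> x powr (2 - g) * (1 + (real N - 1) * g)"
      using head_bound[OF g0 g1] unfolding N_def[symmetric] by (intro mult_left_mono) auto
    finally show ?thesis .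
  qed
  also have "(\<Sum>n\<in>{N..<K'}. g * f n) \<le> (\<Sum>n\<in>{N..<K'}. Phi x (real n * g) - Phi x (real (Suc n) * g))"
  proof (rule sum_mono)
    fix n assume "n \<in> {N..<K'}"
    hence "real N + 1 \<le> real (Suc n)" by simp
    hence "(real N + 1) * g \<le> real (Suc n) * g" using g0 by (intro mult_right_mono) auto
    hence t2: "2 < real (Suc n) * g" using N2 by linarith
    have "real (Suc n) * g - g = real n * g" by (simp add: algebra_simps)
    thus "g * f n \<le> Phi x (real n * g) - Phi x (real (Suc n) * g)"
      using tail_step[OF x1 g0 g1 t2] unfolding f_def by simp
  qed
  also have "\<dots> = Phi x (real N * g) - Phi x (real K' * g)"
    by (rule telescope_ge[OF NK, of "\<lambda>n. Phi x (real n * g)"])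
  also have "\<dots> \<le> Phi x (real N * g)"
  proof -
    have "real N * g \<le> real K' * g" using NK g0 by (intro mult_right_mono) auto
    hence "1 \<le> real K' * g" using N2 g1 by (simp add: algebra_simps)
    thus ?thesis using Phi_nonneg[of x "real K' * g"] x1 by simp
  qed
  also have "Phi x (real N * g) = (2 - real N * g) * x^2 + x^2 * (exp x - 1)"
  proof (cases "real N * g < 2")
    case True
    have "1 < real N * g" using N2 g1 by (simp add: algebra_simps)
    hence "Phi x (real N * g) = PhiM x 1 (real N * g)" using True by (intro Phi_eq) auto
    thus ?thesis by (simp add: PhiM_def power2_eq_square)
  next
    case False
    hence e: "real N * g = 2" using N1 by simp
    have "Phi x 2 = PhiM x 2 2" by (intro Phi_eq) auto
    thus ?thesis unfolding e by (simp add: PhiM_def power2_eq_square eval_nat_numeral algebra_simps)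
  qed
  finally have S: "g * (\<Sum>n<K'. f n) \<le> x powr (2 - g) * (1 + (real N - 1) * g) + ((2 - real N * g) * x^2 + x^2 * (exp x - 1))"
    by simp
  have xp: "x powr (2 - g) \<le> x^2" using powr_le_pow[OF x1, of "2 - g" 2] g0 by simp
  have Ng: "0 \<le> real N * g - 1" using N2 g1 by (simp add: algebra_simps)
  have "(real N * g - 1) * x powr (2 - g) \<le> (real N * g - 1) * x^2" using xp Ng by (rule mult_left_mono)
  hence "x powr (2 - g) * (1 + (real N - 1) * g) + ((2 - real N * g) * x^2 + x^2 * (exp x - 1))
         \<le> (2 - g) * x powr (2 - g) + x^2 * exp x" by (simp add: algebra_simps)
  with S step1 show ?thesis unfolding f_def by linarith
qed


theorem lemmaA3:
  fixes \<beta> \<alpha> :: real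
  assumes "0 < \<beta>" "\<beta> < 1" "\<alpha> \<ge> 1"
  shows "summable (\<lambda>n::nat. \<alpha> ^ n / Gamma (real (Suc n) * (1 - \<beta>))) \<and>
    (\<Sum>n::nat. \<alpha> ^ n / Gamma (real (Suc n) * (1 - \<beta>)))
      \<le> (\<beta> + 1) / (1 - \<beta>) * \<alpha> powr ((1 + \<beta>) / (1 - \<beta>))
        + \<alpha> powr (2 / (1 - \<beta>)) * exp (\<alpha> powr (1 / (1 - \<beta>))) / (1 - \<beta>)"
proof -
  define g where "g = 1 - \<beta>"
  have g0: "0 < g" and g1: "g < 1" using assms unfolding g_def by auto
  have a0: "0 < \<alpha>" using assms by simp
  define x where "x = \<alpha> powr (1/g)"
  have x1: "1 \<le> x" unfolding x_def using assms g0 by (intro ge_one_powr_ge_zero) auto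
  have xa: "x powr c = \<alpha> powr (c / g)" for c unfolding x_def by (simp add: powr_powr)
  have fx: "\<alpha> ^ n = x powr (real n * g)" for n
    unfolding xa using g0 a0 by (simp add: powr_realpow)
  define f where "f n = \<alpha> ^ n / Gamma (real (Suc n) * (1 - \<beta>))" for n
  have f_eq: "f n = x powr (real n * g) / Gamma (real (Suc n) * g)" for n
    unfolding f_def fx g_def ..
  define R where "R = (2 - g) * x powr (2 - g) + x^2 * exp x"
  have f0: "0 \<le> f n" for n unfolding f_eq using g0 by simp
  have bnd: "(\<Sum>n<K. f n) \<le> R / g" for K
    using main_bound[OF g0 g1 x1, of K] g0 unfolding R_def f_eq by (simp add: le_divide_eq mult.commute)
  have sm: "summable f" by (rule summableI_nonneg_bounded[OF f0 bnd])
  have le: "suminf f \<le> R / g" by (rule suminf_le_const[OF sm bnd])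
  have "R / g = (\<beta> + 1) / (1 - \<beta>) * \<alpha> powr ((1 + \<beta>) / (1 - \<beta>))
        + \<alpha> powr (2 / (1 - \<beta>)) * exp (\<alpha> powr (1 / (1 - \<beta>))) / (1 - \<beta>)"
  proof -
    have "x powr (2 - g) = \<alpha> powr ((1 + \<beta>) / (1 - \<beta>))" unfolding xa g_def by simp
    moreover have "x^2 = \<alpha> powr (2 / (1 - \<beta>))"
      using xa[of 2] x1 by (simp add: powr_realpow g_def)
    moreover have "x = \<alpha> powr (1 / (1 - \<beta>))" unfolding x_def g_def ..
    ultimately show ?thesis unfolding R_def g_def by (simp add: add_divide_distrib algebra_simps)
  qed
  with sm le show ?thesis unfolding f_def by simp
qed

end
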